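(* Let $A\in\mathbb{R}^{n\times n}$, $B\in\mathbb{R}^{n\times m}$ and consider the system $x^+=Ax+Bu+d$ with disturbance $d\in\mathcal{D}$, where $\mathcal{D}:=\{\sum_{i=1}^{n_d}\alpha_i d^{(i)}:\mathbf{1}^\top\alpha=1,\ \alpha\ge0\}$ is a polyhedral C-set with vertices $d^{(1)},\dots,d^{(n_d)}\in\mathbb{R}^n$. Let $\mathrm{S}\in\mathbb{R}^{n_s\times n}$ be such that $\mathcal{S}:=\{x:\mathrm{S}x\le\mathbf{1}\}$ is a C-set, and $\mathrm{U}\in\mathbb{R}^{n_u\times m}$ with $\mathcal{U}:=\{u:\mathrm{U}u\le\mathbf{1}\}$ (a polyhedral convex set containing the origin in its interior). Let $u_d(0),\dots,u_d(T-1)$ be inputs, $d_d(0),\dots,d_d(T-1)\in\mathcal{D}$ (unknown) disturbances, and $x_d(0),\dots,x_d(T)$ states with $x_d(k+1)=Ax_d(k)+Bu_d(k)+d_d(k)$; set $U_{0,T}:=[u_d(0)\ \cdots\ u_d(T-1)]$, $X_{0,T}:=[x_d(0)\ \cdots\ x_d(T-1)]$, $X_{1,T}:=[x_d(1)\ \cdots\ x_d(T)]$. For $j\in\{1,\dots,T\}$ and $i\in\{1,\dots,n_d\}$ let $\delta_{ji}\in\mathbb{R}^{n\times T}$ be the matrix whose $j$-th column is $T d^{(i)}$ and all other columns are zero. If there exists $G_K\in\mathbb{R}^{T\times n}$ such that $\mathrm{S}\big((X_{1,T}-\delta_{ji})G_Ks+w\big)\le\mathbf{1}$ for all vertices $s$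 of $\mathcal{S}$, all vertices $w$ of $\mathcal{D}$, all $j\in\{1,\dots,T\}$ and all $i\in\{1,\dots,n_d\}$; $\;\mathrm{U}U_{0,T}G_Ks\le\mathbf{1}$ for all vertices $s$ of $\mathcal{S}$; and $I_n=X_{0,T}G_K$, then the state-feedback gain $K=U_{0,T}G_K$ is such that $\mathcal{S}$ is robustly invariant with respect to $\mathcal{D}$ for $x^+=(A+BK)x+d$ and $\mathcal{S}$ is admissible for $\mathcal{U}$.
   Context: $\mathbf{1}$ denotes the vector of all ones of appropriate dimension; inequalities between vectors/matrices are entrywise. A C-set is a convex compact subset of $\mathbb{R}^n$ containing the origin as an interior point. A set $\mathcal{S}$ is robustly invariant with respect to $\mathcal{D}$ for $x^+=Fx+d$ if for every initial condition $x(0)\in\mathcal{S}$ and every disturbance sequence with $d(t)\in\mathcal{D}$ for all $t\ge0$, the resulting solution satisfies $x(t)\in\mathcal{S}$ for all $t\ge0$. $\mathcal{S}$ is admissible for $\mathcal{U}$ (with gain $K$) if $Kx\in\mathcal{U}$ for every $x\in\mathcal{S}$. *)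

theory Defs
  imports "HOL-Analysis.Analysis"
begin

definition C_set :: "'a::euclidean_space set \<Rightarrow> bool" where
  "C_set X \<longleftrightarrow> convex X \<and> compact X \<and> 0 \<in> interior X"

fun traj :: "real^'n^'n \<Rightarrow> real^'n \<Rightarrow> (nat \<Rightarrow> real^'n) \<Rightarrow> nat \<Rightarrow> real^'n" where
  "traj F x0 d 0 = x0"
| "traj F x0 d (Suc t) = F *v traj F x0 d t + d t"

definition robustly_invariant :: "real^'n^'n \<Rightarrow> (real^'n) set \<Rightarrow> (real^'n) set \<Rightarrow> bool" where
  "robustly_invariant F Dset Sset \<longleftrightarrow>
     (\<forall>x0 d. x0 \<in> Sset \<longrightarrow> (\<forall>t. d t \<in> Dset) \<longrightarrow> (\<forall>t. traj F x0 d t \<in> Sset))"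

definition admissible :: "real^'n^'m \<Rightarrow> (real^'n) set \<Rightarrow> (real^'m) set \<Rightarrow> bool" where
  "admissible K Sset Uset \<longleftrightarrow> (\<forall>x\<in>Sset. K *v x \<in> Uset)"

end

theory Submission
  imports Defs
begin

lemma convex_le_one:
  fixes L :: "'a::real_vector \<Rightarrow> real^'s"
  assumes "linear L"
  shows "convex {x. L x + c \<le> 1}"
  unfolding convex_def
proof (intro ballI allI impI, simp)
  fix x y :: 'a and u v :: real
  assume xy: "L x + c \<le> 1" "L y + c \<le> 1" and uv: "0 \<le> u" "0 \<le> v" "u + v = 1"
  have eq: "L (u *\<^sub>R x + v *\<^sub>R y) + c = u *\<^sub>R (L x + c) + v *\<^sub>R (L y + c)"
    using assms uv(3) by (simp add: linear_add linear_scale algebra_simps scaleR_add_left[symmetric])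
  show "L (u *\<^sub>R x + v *\<^sub>R y) + c \<le> 1"
    unfolding eq less_eq_vec_def
  proof
    fix i
    have a: "(L x + c) $ i \<le> 1" "(L y + c) $ i \<le> 1" using xy by (auto simp: less_eq_vec_def)
    have "u * (L x + c) $ i \<le> u * 1" "v * (L y + c) $ i \<le> v * 1"
      using mult_left_mono[OF a(1) uv(1)] mult_left_mono[OF a(2) uv(2)] by auto
    then show "(u *\<^sub>R (L x + c) + v *\<^sub>R (L y + c)) $ i \<le> 1 $ i"
      using uv(3) by simp
  qed
qed

lemma linear_matvec_left: "linear (\<lambda>M::real^'a^'b. M *v v)"
  by (rule linearI) (simp_all add: matrix_vector_mult_add_rdistrib scaleR_matrix_vector_assoc)

lemma linear_matvec_comp: "linear (\<lambda>M::real^'a^'b. S *v (M *v v))"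
  using linear_compose[OF linear_matvec_left matrix_vector_mul_linear[of S]]
  by (simp add: o_def)


theorem proposition1:
  fixes A :: "real^'n^'n" and B :: "real^'m^'n"
    and dv :: "'d::finite \<Rightarrow> real^'n"
    and Smat :: "real^'n^'s" and Umat :: "real^'m^'u"
    and ud :: "nat \<Rightarrow> real^'m" and xd :: "nat \<Rightarrow> real^'n" and dd :: "nat \<Rightarrow> real^'n"
    and col :: "'t::finite \<Rightarrow> nat"
    and GK :: "real^'n^'t"
  defines "Dset \<equiv> {\<Sum>i\<in>UNIV. \<alpha> i *\<^sub>R dv i | \<alpha>. (\<forall>i. \<alpha> i \<ge> 0) \<and> sum \<alpha> UNIV = 1}"
    and "Sset \<equiv> {x. Smat *v x \<le> 1}"
    and "Uset \<equiv> {u. Umat *v u \<le> 1}"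
    and "T \<equiv> CARD('t)"
    and "U0T \<equiv> (\<chi> r j. ud (col j) $ r) :: real^'t^'m"
    and "X0T \<equiv> (\<chi> r j. xd (col j) $ r) :: real^'t^'n"
    and "X1T \<equiv> (\<chi> r j. xd (Suc (col j)) $ r) :: real^'t^'n"
    and "\<delta> \<equiv> (\<lambda>j i. (\<chi> r j'. if j' = j then (real CARD('t) *\<^sub>R dv i) $ r else 0) :: real^'t^'n)"
  assumes D_Cset: "C_set Dset"
    and D_vertices: "{w. w extreme_point_of Dset} = range dv"
    and S_Cset: "C_set Sset"
    and col_bij: "bij_betw col UNIV {..<T}"
    and dd_in: "\<And>k. k < T \<Longrightarrow> dd k \<in> Dset"
    and dyn: "\<And>k. k < T \<Longrightarrow> xd (Suc k) = A *v xd k + B *v ud k + dd k"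
    and inv_cond: "\<And>s w j i. s extreme_point_of Sset \<Longrightarrow> w extreme_point_of Dset \<Longrightarrow>
                     Smat *v ((X1T - \<delta> j i) *v (GK *v s) + w) \<le> 1"
    and adm_cond: "\<And>s. s extreme_point_of Sset \<Longrightarrow> Umat *v (U0T *v (GK *v s)) \<le> 1"
    and id_cond: "mat 1 = X0T ** GK"
  shows "robustly_invariant (A + B ** (U0T ** GK)) Dset Sset \<and> admissible (U0T ** GK) Sset Uset"
proof -
  have Dcc: "compact Dset" "convex Dset" using D_Cset by (auto simp: C_set_def)
  have Scc: "compact Sset" "convex Sset" using S_Cset by (auto simp: C_set_def)
  have Dhull: "Dset = convex hull {x. x extreme_point_of Dset}"
    using Krein_Milman_Minkowski[OF Dcc] .
  have Shull: "Sset = convex hull {x. x extreme_point_of Sset}"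
    using Krein_Milman_Minkowski[OF Scc] .
  define Dd :: "real^'t^'n" where "Dd = (\<chi> r j. dd (col j) $ r)"
  define K where "K = U0T ** GK"
  have colT: "col j < T" for j using col_bij by (auto simp: bij_betw_def)
  have XD: "X1T - Dd = A ** X0T + B ** U0T"
    by (simp add: vec_eq_iff X1T_def X0T_def U0T_def Dd_def matrix_matrix_mult_def
        dyn[OF colT] matrix_vector_mult_def)
  have Fx: "(A + B ** K) *v x = (X1T - Dd) *v (GK *v x)" for x
  proof -
    have "A *v x = A *v (X0T *v (GK *v x))"
      by (simp add: matrix_vector_mul_assoc id_cond[symmetric])
    then show ?thesis unfolding XD K_def
      by (simp add: matrix_vector_mult_add_rdistrib matrix_vector_mul_assoc[symmetric])
  qed
  have st1: "Smat *v ((X1T - \<delta> j i) *v (GK *v s) + w) \<le> 1"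
    if s: "s extreme_point_of Sset" and w: "w \<in> Dset" for s w j i
  proof -
    let ?C = "{w. Smat *v w + Smat *v ((X1T - \<delta> j i) *v (GK *v s)) \<le> 1}"
    have "convex ?C" by (rule convex_le_one[OF matrix_vector_mul_linear])
    moreover have "{x. x extreme_point_of Dset} \<subseteq> ?C"
      using inv_cond[OF s] by (auto simp: matrix_vector_right_distrib add.commute)
    ultimately have "convex hull {x. x extreme_point_of Dset} \<subseteq> ?C"
      by (rule hull_minimal[rotated])
    then show ?thesis using w Dhull by (auto simp: matrix_vector_right_distrib add.commute)
  qed
  have st2: "Smat *v ((X1T - \<delta> j i) *v (GK *v s) + w) \<le> 1"
    if s: "s \<in> Sset" and w: "w \<in> Dset" for s w j i
  proof -
    let ?C = "{s. (Smat ** (X1T - \<delta> j i) ** GK) *v s + Smat *v w \<le> 1}"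
    have "convex ?C" by (rule convex_le_one[OF matrix_vector_mul_linear])
    moreover have "{x. x extreme_point_of Sset} \<subseteq> ?C"
      using st1[OF _ w] by (auto simp: matrix_vector_right_distrib matrix_vector_mul_assoc matrix_mul_assoc)
    ultimately have "convex hull {x. x extreme_point_of Sset} \<subseteq> ?C"
      by (rule hull_minimal[rotated])
    then show ?thesis using s Shull
      by (auto simp: matrix_vector_right_distrib matrix_vector_mul_assoc matrix_mul_assoc)
  qed
  have "\<forall>j. \<exists>a. (\<forall>i. a i \<ge> 0) \<and> sum a UNIV = 1 \<and> dd (col j) = (\<Sum>i\<in>UNIV. a i *\<^sub>R dv i)"
    using dd_in[OF colT] unfolding Dset_def by blast
  then obtain a where a: "\<And>j i. a j i \<ge> 0" "\<And>j. sum (a j) UNIV = 1"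
    "\<And>j. dd (col j) = (\<Sum>i\<in>UNIV. a j i *\<^sub>R dv i)"
    by metis
  have Tpos: "real T > 0" unfolding T_def by simp
  define c where "c = (\<lambda>(j,i). a j i / real T)"
  have c0: "\<forall>p\<in>UNIV. c p \<ge> 0" using a(1) Tpos by (auto simp: c_def)
  have c1: "sum c UNIV = 1"
  proof -
    have "sum c UNIV = (\<Sum>j\<in>UNIV. \<Sum>i\<in>UNIV. a j i / real T)"
      unfolding c_def UNIV_Times_UNIV[symmetric] sum.cartesian_product[symmetric] by simp
    also have "\<dots> = (\<Sum>j\<in>(UNIV::'t set). 1 / real T)"
      using a(2) by (simp add: sum_divide_distrib[symmetric])
    also have "\<dots> = 1" using Tpos by (simp add: T_def)
    finally show ?thesis .
  qed
  have cD: "(\<Sum>p\<in>UNIV. c p *\<^sub>R (case p of (j,i) \<Rightarrow> \<delta> j i)) = Dd"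
  proof -
    have "(\<Sum>p\<in>UNIV. c p *\<^sub>R (case p of (j,i) \<Rightarrow> \<delta> j i)) $ r $ j' = Dd $ r $ j'" for r j'
    proof -
      have "(\<Sum>p\<in>UNIV. c p *\<^sub>R (case p of (j,i) \<Rightarrow> \<delta> j i)) $ r $ j'
          = (\<Sum>p\<in>UNIV. (c p *\<^sub>R (case p of (j,i) \<Rightarrow> \<delta> j i)) $ r $ j')"
        by (simp add: sum_component)
      also have "\<dots> = (\<Sum>p\<in>UNIV. (case p of (j,i) \<Rightarrow> a j i / real T * (if j' = j then real T * dv i $ r else 0)))"
        by (intro sum.cong refl) (simp add: sum_component c_def \<delta>_def T_def split: prod.splits)
      also have "\<dots> = (\<Sum>j\<in>UNIV. \<Sum>i\<in>UNIV. a j i / real T * (if j' = j then real T * dv i $ r else 0))"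
        unfolding UNIV_Times_UNIV[symmetric] sum.cartesian_product[symmetric] by simp
      also have "\<dots> = (\<Sum>j\<in>UNIV. if j' = j then (\<Sum>i\<in>UNIV. a j i * dv i $ r) else 0)"
      proof (intro sum.cong refl)
        fix j show "(\<Sum>i\<in>UNIV. a j i / real T * (if j' = j then real T * dv i $ r else 0))
          = (if j' = j then (\<Sum>i\<in>UNIV. a j i * dv i $ r) else 0)"
          using Tpos by (cases "j' = j") (auto intro!: sum.cong)
      qed
      also have "\<dots> = (\<Sum>i\<in>UNIV. a j' i * dv i $ r)" by simp
      also have "\<dots> = Dd $ r $ j'" by (simp add: Dd_def a(3) sum_component)
      finally show ?thesis .
    qed
    then show ?thesis by (simp add: vec_eq_iff)
  qed
  have comb: "(\<Sum>p\<in>UNIV. c p *\<^sub>R (case p of (j,i) \<Rightarrow> X1T - \<delta> j i)) = X1T - Dd"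
  proof -
    have "(\<Sum>p\<in>UNIV. c p *\<^sub>R (case p of (j,i) \<Rightarrow> X1T - \<delta> j i))
        = (\<Sum>p\<in>UNIV. c p *\<^sub>R X1T - c p *\<^sub>R (case p of (j,i) \<Rightarrow> \<delta> j i))"
      by (intro sum.cong) (auto simp: scaleR_diff_right split: prod.splits)
    also have "\<dots> = sum c UNIV *\<^sub>R X1T - (\<Sum>p\<in>UNIV. c p *\<^sub>R (case p of (j,i) \<Rightarrow> \<delta> j i))"
      by (simp add: sum_subtractf scaleR_sum_left)
    finally show ?thesis using c1 cD by simp
  qed
  have step: "(A + B ** K) *v x + w \<in> Sset" if x: "x \<in> Sset" and w: "w \<in> Dset" for x w
  proof -
    let ?C = "{M. Smat *v (M *v (GK *v x)) + Smat *v w \<le> 1}"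
    have cv: "convex ?C" by (rule convex_le_one[OF linear_matvec_comp])
    have "(\<Sum>p\<in>UNIV. c p *\<^sub>R (case p of (j,i) \<Rightarrow> X1T - \<delta> j i)) \<in> ?C"
      by (rule convex_sum[OF finite cv c1]) (use c0 in auto,
        use st2[OF x w] in \<open>auto simp: matrix_vector_right_distrib split: prod.splits\<close>)
    then show ?thesis unfolding comb Fx Sset_def by (simp add: matrix_vector_right_distrib)
  qed
  have RI: "robustly_invariant (A + B ** K) Dset Sset"
    unfolding robustly_invariant_def
  proof (intro allI impI)
    fix x0 and d :: "nat \<Rightarrow> real^'n" and t :: nat assume x0: "x0 \<in> Sset" and d: "\<forall>t. d t \<in> Dset"
    show "traj (A + B ** K) x0 d t \<in> Sset"
      by (induction t) (auto simp: x0 d step)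
  qed
  have AD: "admissible K Sset Uset"
    unfolding admissible_def
  proof
    fix x assume x: "x \<in> Sset"
    let ?C = "{x. (Umat ** U0T ** GK) *v x + 0 \<le> 1}"
    have "convex ?C" by (rule convex_le_one[OF matrix_vector_mul_linear])
    moreover have "{x. x extreme_point_of Sset} \<subseteq> ?C"
      using adm_cond by (auto simp: matrix_vector_mul_assoc matrix_mul_assoc)
    ultimately have "convex hull {x. x extreme_point_of Sset} \<subseteq> ?C"
      by (rule hull_minimal[rotated])
    then show "K *v x \<in> Uset" using x Shull
      by (auto simp: Uset_def K_def matrix_vector_mul_assoc matrix_mul_assoc)
  qed
  show ?thesis using RI AD unfolding K_def by simp
qed

end
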